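(* Let $Q$ be a TC-query with timing sequence $\{\epsilon_1,\dots,\epsilon_k\}$ and expansion list $L=\{L^1,\dots,L^k\}$, where $L^j$ stores $\Omega(Preq(\epsilon_j))$ in the current snapshot. Suppose an incoming edge $\sigma$ (which has the largest timestamp in the current window) matches query edge $\epsilon_i$. Then, among the items of $L$, only the partial matches of $L^i$ (i.e., of $Preq(\epsilon_i)$) need to be updated due to $\sigma$ playing the role of $\epsilon_i$. Moreover: (1) if $i=1$, $\sigma$ is inserted into $L^1$ as a new match of $Preq(\epsilon_1)=\{\epsilon_1\}$; (2) if $i\neq 1$ and $\Omega(L^{i-1})\bowtie\{\sigma\}\neq\emptyset$, then $\Omega(L^{i-1})\bowtie\{\sigma\}$ is inserted into $L^i$ as the new matches of $Preq(\epsilon_i)$, where $\Omega(L^{i-1})$ is the set of partial matches stored in $L^{i-1}$.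
   Context: Streaming graph: a growing sequence of labelled directed edges $\sigma_1,\sigma_2,\dots$ with strictly increasing timestamps; with a window of duration $|W|$, the snapshot at time $t$ contains the edges with timestamps in $(t-|W|,t]$. A query $Q=(V(Q),E(Q),L,\prec)$ has a vertex labelling and a strict partial order $\prec$ (timing order) on its directed edges. A time-constrained match of a (sub)query is a subgraph $g$ of the snapshot with a label-preserving bijection $F$ from query vertices to $V(g)$ such that $\overrightarrow{uv}$ is a query edge iff $\overrightarrow{F(u)F(v)}\in E(g)$, and $\epsilon\prec\epsilon'$ implies the data edge matched to $\epsilon$ has smaller timestamp than that matched to $\epsilon'$. $\Omega(Q')$ denotes the set of matches of subquery $Q'$ in the current snapshot. For subqueries $Q^1,Q^2$ with matches $g_1,g_2$ via $F_1,F_2$, $g_1$ and $g_2$ are compatible if $g_1\cup g_2$ is a time-constrained match of $Q^1\cup Q^2$ via the bijection $F_1\cup F_2$; $\Omega(Q^1)\bowtie\Omega(Q^2)=\{g_1\cup g_2: g_1\in\Omega(Q^1),g_2\in\Omega(Q^2), g_1,g_2 \text{ compatible}\}$ (here $\{\sigma\}$ is regarded as a match of the single-edge subquery $\{\epsilon_i\}$). For $\epsilon\in E(Q)$, $Preq(\epsilon)$ is the subquery induced by $\{\epsilon':\epsilon'\prec\epsilon\}\cup\{\epsilon\}$. A prefix-connected sequence of $Q$ is an ordering $\epsilon_1,\dots,\epsilon_k$ of all edges of $Q$ such that for each $j$ the subquery induced by $\epsilon_1,\dots,\epsilon_j$ is weakly connected. $Q$ is a TC-query (timing-connected query) if it has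 a prefix-connected sequence with $\epsilon_j\prec\epsilon_{j+1}$ for all $j\in[1,k-1]$; this sequence is its timing sequence. The expansion list of a TC-query is $L=\{L^1,\dots,L^k\}$, where item $L^i$ corresponds to the subquery $\{\epsilon_1,\dots,\epsilon_i\}$ (which equals $Preq(\epsilon_i)$) and records the set $\Omega(L^i)$ of its time-constrained matches in the current snapshot. *)

theory Defs
  imports Complex_Main
begin

text \<open>A data edge is (timestamp, source, target). Edge labels play no role for
  queries (queries carry only a vertex labelling), so they are omitted.\<close>
type_synonym 'v dedge = "real \<times> 'v \<times> 'v"

definition ts :: "'v dedge \<Rightarrow> real" where "ts e = fst e"
definition src :: "'v dedge \<Rightarrow> 'v" where "src e = fst (snd e)"
definition tgt :: "'v dedge \<Rightarrow> 'v" where "tgt e = snd (snd e)"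

definition valid_stream :: "(nat \<Rightarrow> 'v dedge) \<Rightarrow> bool" where
  "valid_stream s \<longleftrightarrow> strict_mono (\<lambda>n. ts (s n))"

definition snapshot :: "(nat \<Rightarrow> 'v dedge) \<Rightarrow> real \<Rightarrow> real \<Rightarrow> 'v dedge set" where
  "snapshot s W t = {s n | n. t - W < ts (s n) \<and> ts (s n) \<le> t}"

type_synonym 'q qedge = "'q \<times> 'q"

definition qverts :: "'q qedge set \<Rightarrow> 'q set" where
  "qverts E = fst ` E \<union> snd ` E"

definition weakly_connected :: "'q qedge set \<Rightarrow> bool" where
  "weakly_connected E \<longleftrightarrow> (\<forall>u\<in>qverts E. \<forall>v\<in>qverts E. (u, v) \<in> (E \<union> E\<inverse>)\<^sup>*)"

definition is_query :: "'q set \<Rightarrow> 'q qedge set \<Rightarrow> ('q qedge \<Rightarrow> 'q qedge \<Rightarrow> bool) \<Rightarrow> bool" where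
  "is_query VQ EQ prec \<longleftrightarrow> finite VQ \<and> EQ \<subseteq> VQ \<times> VQ
     \<and> (\<forall>a b. prec a b \<longrightarrow> a \<in> EQ \<and> b \<in> EQ)
     \<and> (\<forall>a. \<not> prec a a)
     \<and> (\<forall>a b c. prec a b \<longrightarrow> prec b c \<longrightarrow> prec a c)"

definition prefix_connected :: "'q qedge set \<Rightarrow> 'q qedge list \<Rightarrow> bool" where
  "prefix_connected EQ es \<longleftrightarrow> distinct es \<and> set es = EQ
     \<and> (\<forall>j\<in>{1..length es}. weakly_connected (set (take j es)))"

definition timing_sequence :: "'q qedge set \<Rightarrow> ('q qedge \<Rightarrow> 'q qedge \<Rightarrow> bool) \<Rightarrow> 'q qedge list \<Rightarrow> bool" where
  "timing_sequence EQ prec es \<longleftrightarrow> prefix_connected EQ es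
     \<and> (\<forall>j. j + 1 < length es \<longrightarrow> prec (es ! j) (es ! (j + 1)))"

definition TC_query :: "'q set \<Rightarrow> 'q qedge set \<Rightarrow> ('q qedge \<Rightarrow> 'q qedge \<Rightarrow> bool) \<Rightarrow> bool" where
  "TC_query VQ EQ prec \<longleftrightarrow> is_query VQ EQ prec \<and> (\<exists>es. timing_sequence EQ prec es)"

text \<open>Item L^j (1-based) of the expansion list: the subquery {eps_1, ..., eps_j}.\<close>
definition expansion_item :: "'q qedge list \<Rightarrow> nat \<Rightarrow> 'q qedge set" where
  "expansion_item es j = set (take j es)"

definition Preq :: "'q qedge set \<Rightarrow> ('q qedge \<Rightarrow> 'q qedge \<Rightarrow> bool) \<Rightarrow> 'q qedge \<Rightarrow> 'q qedge set" where
  "Preq EQ prec \<epsilon> = {\<epsilon>' \<in> EQ. prec \<epsilon>' \<epsilon>} \<union> {\<epsilon>}"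

text \<open>A match of the subquery with edge set E' in the data edge set D is recorded as
  the partial map M from query edges to the data edges matched to them (dom M = E');
  the matched subgraph g is ran M and the vertex bijection F is given by the endpoints.\<close>
definition is_tc_match ::
  "('v \<Rightarrow> 'l) \<Rightarrow> ('q \<Rightarrow> 'l) \<Rightarrow> ('q qedge \<Rightarrow> 'q qedge \<Rightarrow> bool) \<Rightarrow> 'v dedge set
    \<Rightarrow> 'q qedge set \<Rightarrow> ('q qedge \<rightharpoonup> 'v dedge) \<Rightarrow> bool" where
  "is_tc_match lab LQ prec D E' M \<longleftrightarrow> dom M = E'
     \<and> (\<exists>F. inj_on F (qverts E') \<and> (\<forall>u\<in>qverts E'. lab (F u) = LQ u)
          \<and> (\<forall>\<epsilon>\<in>E'. \<exists>d. M \<epsilon> = Some d \<and> d \<in> D \<and> src d = F (fst \<epsilon>) \<and> tgt d = F (snd \<epsilon>)))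
     \<and> (\<forall>\<epsilon>\<in>E'. \<forall>\<epsilon>'\<in>E'. prec \<epsilon> \<epsilon>' \<longrightarrow> ts (the (M \<epsilon>)) < ts (the (M \<epsilon>')))"

definition Omega ::
  "('v \<Rightarrow> 'l) \<Rightarrow> ('q \<Rightarrow> 'l) \<Rightarrow> ('q qedge \<Rightarrow> 'q qedge \<Rightarrow> bool) \<Rightarrow> 'v dedge set
    \<Rightarrow> 'q qedge set \<Rightarrow> ('q qedge \<rightharpoonup> 'v dedge) set" where
  "Omega lab LQ prec D E' = {M. is_tc_match lab LQ prec D E' M}"

definition compatible ::
  "('v \<Rightarrow> 'l) \<Rightarrow> ('q \<Rightarrow> 'l) \<Rightarrow> ('q qedge \<Rightarrow> 'q qedge \<Rightarrow> bool) \<Rightarrow> 'v dedge set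
    \<Rightarrow> ('q qedge \<rightharpoonup> 'v dedge) \<Rightarrow> ('q qedge \<rightharpoonup> 'v dedge) \<Rightarrow> bool" where
  "compatible lab LQ prec D M1 M2 \<longleftrightarrow>
     (\<forall>x \<in> dom M1 \<inter> dom M2. M1 x = M2 x)
     \<and> is_tc_match lab LQ prec D (dom M1 \<union> dom M2) (M1 ++ M2)"

definition join ::
  "('v \<Rightarrow> 'l) \<Rightarrow> ('q \<Rightarrow> 'l) \<Rightarrow> ('q qedge \<Rightarrow> 'q qedge \<Rightarrow> bool) \<Rightarrow> 'v dedge set
    \<Rightarrow> ('q qedge \<rightharpoonup> 'v dedge) set \<Rightarrow> ('q qedge \<rightharpoonup> 'v dedge) set \<Rightarrow> ('q qedge \<rightharpoonup> 'v dedge) set" where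
  "join lab LQ prec D A B =
     {M1 ++ M2 | M1 M2. M1 \<in> A \<and> M2 \<in> B \<and> compatible lab LQ prec D M1 M2}"

definition edge_matches :: "('v \<Rightarrow> 'l) \<Rightarrow> ('q \<Rightarrow> 'l) \<Rightarrow> 'v dedge \<Rightarrow> 'q qedge \<Rightarrow> bool" where
  "edge_matches lab LQ \<sigma> \<epsilon> \<longleftrightarrow> lab (src \<sigma>) = LQ (fst \<epsilon>) \<and> lab (tgt \<sigma>) = LQ (snd \<epsilon>)
     \<and> (src \<sigma> = tgt \<sigma> \<longleftrightarrow> fst \<epsilon> = snd \<epsilon>)"

end

theory Submission imports Defs begin

lemma nth_in_take_iff:
  assumes "distinct xs" "k < length xs"
  shows "xs ! k \<in> set (take j xs) \<longleftrightarrow> k < j"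
proof
  assume "xs ! k \<in> set (take j xs)"
  then obtain m where m: "m < length (take j xs)" "take j xs ! m = xs ! k"
    by (auto simp: in_set_conv_nth)
  hence "xs ! m = xs ! k" "m < j" "m < length xs" by auto
  with assms have "m = k" using nth_eq_iff_index_eq by blast
  thus "k < j" using \<open>m < j\<close> by simp
next
  assume "k < j" thus "xs ! k \<in> set (take j xs)" using assms
    by (metis in_set_conv_nth length_take min_less_iff_conj nth_take)
qed

lemma chain_prec:
  assumes tr: "\<forall>a b c. prec a b \<longrightarrow> prec b c \<longrightarrow> prec a c"
    and ch: "\<forall>j. j + 1 < length es \<longrightarrow> prec (es ! j) (es ! (j + 1))"
    and "j < k" "k < length es"
  shows "prec (es ! j) (es ! k)"
  using assms(3,4)
proof (induction k)
  case 0 thus ?case by simp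
next
  case (Suc k)
  show ?case
  proof (cases "j = k")
    case True thus ?thesis using ch Suc.prems by simp
  next
    case False
    hence "prec (es ! j) (es ! k)" using Suc by simp
    moreover have "prec (es ! k) (es ! Suc k)" using ch Suc.prems by simp
    ultimately show ?thesis using tr by blast
  qed
qed

lemma qverts_mono: "A \<subseteq> B \<Longrightarrow> qverts A \<subseteq> qverts B"
  unfolding qverts_def by auto

lemma restrict_match:
  assumes "is_tc_match lab LQ prec D E M" "E' \<subseteq> E" "\<forall>x\<in>E'. the (M x) \<in> D'"
  shows "is_tc_match lab LQ prec D' E' (M |` E')"
proof -
  from assms(1) obtain F where F: "inj_on F (qverts E)" "\<forall>u\<in>qverts E. lab (F u) = LQ u"
    "\<forall>\<epsilon>\<in>E. \<exists>d. M \<epsilon> = Some d \<and> d \<in> D \<and> src d = F (fst \<epsilon>) \<and> tgt d = F (snd \<epsilon>)"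
    and dm: "dom M = E"
    and pr: "\<forall>\<epsilon>\<in>E. \<forall>\<epsilon>'\<in>E. prec \<epsilon> \<epsilon>' \<longrightarrow> ts (the (M \<epsilon>)) < ts (the (M \<epsilon>'))"
    unfolding is_tc_match_def by blast
  have q: "qverts E' \<subseteq> qverts E" using assms(2) by (rule qverts_mono)
  show ?thesis unfolding is_tc_match_def
  proof (intro conjI)
    show "dom (M |` E') = E'" using dm assms(2) by auto
    show "\<exists>F. inj_on F (qverts E') \<and> (\<forall>u\<in>qverts E'. lab (F u) = LQ u) \<and>
      (\<forall>\<epsilon>\<in>E'. \<exists>d. (M |` E') \<epsilon> = Some d \<and> d \<in> D' \<and> src d = F (fst \<epsilon>) \<and> tgt d = F (snd \<epsilon>))"
      apply (rule exI[of _ F])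
      using F q assms(2,3) inj_on_subset by fastforce
    show "\<forall>\<epsilon>\<in>E'. \<forall>\<epsilon>'\<in>E'. prec \<epsilon> \<epsilon>' \<longrightarrow> ts (the ((M |` E') \<epsilon>)) < ts (the ((M |` E') \<epsilon>'))"
      using pr assms(2) by auto
  qed
qed

theorem theorem2:
  fixes s :: "nat \<Rightarrow> 'v dedge" and W :: real and n :: nat
    and lab :: "'v \<Rightarrow> 'l" and VQ :: "'q set" and EQ :: "'q qedge set"
    and LQ :: "'q \<Rightarrow> 'l" and prec :: "'q qedge \<Rightarrow> 'q qedge \<Rightarrow> bool"
    and es :: "'q qedge list" and i :: nat
  assumes "valid_stream s" and "W > 0"
    and "TC_query VQ EQ prec" and "timing_sequence EQ prec es"
    and "1 \<le> i" and "i \<le> length es"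
    and "edge_matches lab LQ (s n) (es ! (i - 1))"
  shows "(\<forall>j\<in>{1..length es}. j \<noteq> i \<longrightarrow>
            {M \<in> Omega lab LQ prec (snapshot s W (ts (s n))) (expansion_item es j).
               M (es ! (i - 1)) = Some (s n)} = {})
       \<and> (i = 1 \<longrightarrow>
            {M \<in> Omega lab LQ prec (snapshot s W (ts (s n))) (expansion_item es 1).
               M (es ! 0) = Some (s n)} = {[es ! 0 \<mapsto> s n]})
       \<and> (i \<noteq> 1 \<and>
          join lab LQ prec (snapshot s W (ts (s n)))
            (Omega lab LQ prec (snapshot s W (ts (s n)) - {s n}) (expansion_item es (i - 1)))
            {[es ! (i - 1) \<mapsto> s n]} \<noteq> {}
          \<longrightarrow>
            {M \<in> Omega lab LQ prec (snapshot s W (ts (s n))) (expansion_item es i).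
               M (es ! (i - 1)) = Some (s n)}
            = join lab LQ prec (snapshot s W (ts (s n)))
                (Omega lab LQ prec (snapshot s W (ts (s n)) - {s n}) (expansion_item es (i - 1)))
                {[es ! (i - 1) \<mapsto> s n]})"
proof -
  define D where "D = snapshot s W (ts (s n))"
  define e where "e = es ! (i - 1)"
  define \<sigma> where "\<sigma> = s n"
  from assms(3) have q: "is_query VQ EQ prec" unfolding TC_query_def by blast
  hence irr: "\<forall>a. \<not> prec a a" and tr: "\<forall>a b c. prec a b \<longrightarrow> prec b c \<longrightarrow> prec a c"
    unfolding is_query_def by blast+
  from assms(4) have dist: "distinct es" and ch: "\<forall>j. j + 1 < length es \<longrightarrow> prec (es ! j) (es ! (j + 1))"
    unfolding timing_sequence_def prefix_connected_def by blast+
  have sD: "\<sigma> \<in> D" unfolding D_def \<sigma>_def snapshot_def using assms(2) by auto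
  have Dle: "\<And>d. d \<in> D \<Longrightarrow> ts d \<le> ts \<sigma>" unfolding D_def \<sigma>_def snapshot_def by auto
  have ilt: "i - 1 < length es" using assms(5,6) by simp
  have em: "edge_matches lab LQ \<sigma> e" using assms(7) unfolding e_def \<sigma>_def .
  have valD: "\<And>D' E M x. is_tc_match lab LQ prec D' E M \<Longrightarrow> x \<in> E \<Longrightarrow> M x \<noteq> None \<and> the (M x) \<in> D'"
  proof -
    fix D' E M x assume a: "is_tc_match lab LQ prec D' E M" "x \<in> E"
    then obtain F where "\<forall>\<epsilon>\<in>E. \<exists>d. M \<epsilon> = Some d \<and> d \<in> D' \<and> src d = F (fst \<epsilon>) \<and> tgt d = F (snd \<epsilon>)"
      unfolding is_tc_match_def by blast
    then obtain d where "M x = Some d" "d \<in> D'" using a(2) by blast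
    thus "M x \<noteq> None \<and> the (M x) \<in> D'" by simp
  qed
  have P1: "\<forall>j\<in>{1..length es}. j \<noteq> i \<longrightarrow>
            {M \<in> Omega lab LQ prec D (expansion_item es j). M e = Some \<sigma>} = {}"
  proof (intro ballI impI)
    fix j assume j: "j \<in> {1..length es}" "j \<noteq> i"
    show "{M \<in> Omega lab LQ prec D (expansion_item es j). M e = Some \<sigma>} = {}"
    proof (rule ccontr)
      assume "{M \<in> Omega lab LQ prec D (expansion_item es j). M e = Some \<sigma>} \<noteq> {}"
      then obtain M where M: "is_tc_match lab LQ prec D (set (take j es)) M" "M e = Some \<sigma>"
        unfolding Omega_def expansion_item_def by auto
      have "e \<in> dom M" using M(2) by auto
      hence "e \<in> set (take j es)" using M(1) unfolding is_tc_match_def by simp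
      hence "i - 1 < j" using nth_in_take_iff[OF dist ilt] unfolding e_def by simp
      hence ij: "i < j" using j by simp
      hence il: "i < length es" using j by simp
      have ein: "es ! i \<in> set (take j es)" using nth_in_take_iff[OF dist il] ij by simp
      have pe: "prec e (es ! i)" unfolding e_def using chain_prec[OF tr ch, of "i - 1" i] il assms(5) by simp
      have "ts (the (M e)) < ts (the (M (es ! i)))"
        using M(1) \<open>e \<in> set (take j es)\<close> ein pe unfolding is_tc_match_def by blast
      moreover have "the (M (es ! i)) \<in> D" using valD[OF M(1) ein] by simp
      ultimately show False using Dle M(2) by fastforce
    qed
  qed
  have P2: "i = 1 \<longrightarrow>
            {M \<in> Omega lab LQ prec D (expansion_item es 1). M (es ! 0) = Some \<sigma>} = {[es ! 0 \<mapsto> \<sigma>]}"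
  proof
    assume i1: "i = 1"
    have ne: "es \<noteq> []" using assms(5,6) by auto
    have t1: "set (take 1 es) = {es ! 0}" using ne by (cases es) auto
    have e0: "e = es ! 0" using i1 e_def by simp
    have single: "is_tc_match lab LQ prec D {es ! 0} [es ! 0 \<mapsto> \<sigma>]"
      unfolding is_tc_match_def
    proof (intro conjI)
      show "dom [es ! 0 \<mapsto> \<sigma>] = {es ! 0}" by simp
      define F where "F = (\<lambda>u. if u = fst (es ! 0) then src \<sigma> else tgt \<sigma>)"
      have qv: "qverts {es ! 0} = {fst (es ! 0), snd (es ! 0)}" unfolding qverts_def by auto
      show "\<exists>F. inj_on F (qverts {es ! 0}) \<and> (\<forall>u\<in>qverts {es ! 0}. lab (F u) = LQ u) \<and>
        (\<forall>\<epsilon>\<in>{es ! 0}. \<exists>d. [es ! 0 \<mapsto> \<sigma>] \<epsilon> = Some d \<and> d \<in> D \<and> src d = F (fst \<epsilon>) \<and> tgt d = F (snd \<epsilon>))"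
      proof (rule exI[of _ F], intro conjI)
        have emm: "lab (src \<sigma>) = LQ (fst (es ! 0))" "lab (tgt \<sigma>) = LQ (snd (es ! 0))"
          "src \<sigma> = tgt \<sigma> \<longleftrightarrow> fst (es ! 0) = snd (es ! 0)"
          using em e0 unfolding edge_matches_def by auto
        have Ff: "F (fst (es ! 0)) = src \<sigma>" unfolding F_def by simp
        have Fs: "F (snd (es ! 0)) = tgt \<sigma>"
        proof (cases "snd (es ! 0) = fst (es ! 0)")
          case True
          hence "src \<sigma> = tgt \<sigma>" using emm(3) by metis
          thus ?thesis unfolding F_def using True by simp
        next
          case False thus ?thesis unfolding F_def by simp
        qed
        show "inj_on F (qverts {es ! 0})" unfolding qv
        proof (cases "fst (es ! 0) = snd (es ! 0)")
          case True thus "inj_on F {fst (es ! 0), snd (es ! 0)}" by simp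
        next
          case False
          hence "F (fst (es ! 0)) \<noteq> F (snd (es ! 0))" using Ff Fs emm(3) by metis
          thus "inj_on F {fst (es ! 0), snd (es ! 0)}" by (auto simp: inj_on_def)
        qed
        show "\<forall>u\<in>qverts {es ! 0}. lab (F u) = LQ u" unfolding qv using Ff Fs emm by auto
        show "\<forall>\<epsilon>\<in>{es ! 0}. \<exists>d. [es ! 0 \<mapsto> \<sigma>] \<epsilon> = Some d \<and> d \<in> D \<and> src d = F (fst \<epsilon>) \<and> tgt d = F (snd \<epsilon>)"
          using Ff Fs sD by simp
      qed
      show "\<forall>\<epsilon>\<in>{es ! 0}. \<forall>\<epsilon>'\<in>{es ! 0}. prec \<epsilon> \<epsilon>' \<longrightarrow> ts (the ([es ! 0 \<mapsto> \<sigma>] \<epsilon>)) < ts (the ([es ! 0 \<mapsto> \<sigma>] \<epsilon>'))"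
        using irr by blast
    qed
    show "{M \<in> Omega lab LQ prec D (expansion_item es 1). M (es ! 0) = Some \<sigma>} = {[es ! 0 \<mapsto> \<sigma>]}"
    proof (rule set_eqI, rule iffI)
      fix M assume "M \<in> {M \<in> Omega lab LQ prec D (expansion_item es 1). M (es ! 0) = Some \<sigma>}"
      hence "dom M = {es ! 0}" "M (es ! 0) = Some \<sigma>"
        unfolding Omega_def expansion_item_def t1 is_tc_match_def by simp_all
      hence "M = [es ! 0 \<mapsto> \<sigma>]" by (auto simp: fun_eq_iff dom_def)
      thus "M \<in> {[es ! 0 \<mapsto> \<sigma>]}" by simp
    next
      fix M assume "M \<in> {[es ! 0 \<mapsto> \<sigma>]}"
      thus "M \<in> {M \<in> Omega lab LQ prec D (expansion_item es 1). M (es ! 0) = Some \<sigma>}"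
        using single unfolding Omega_def expansion_item_def t1 by simp
    qed
  qed
  have P3: "{M \<in> Omega lab LQ prec D (expansion_item es i). M e = Some \<sigma>}
            = join lab LQ prec D (Omega lab LQ prec (D - {\<sigma>}) (expansion_item es (i - 1))) {[e \<mapsto> \<sigma>]}"
  proof -
    have ti: "set (take i es) = set (take (i - 1) es) \<union> {e}"
    proof -
      have "take i es = take (i - 1) es @ [e]" unfolding e_def
        using assms(5) ilt by (metis Suc_diff_1 less_le_trans take_Suc_conv_app_nth zero_less_one)
      thus ?thesis by simp
    qed
    have enot: "e \<notin> set (take (i - 1) es)" using nth_in_take_iff[OF dist ilt] unfolding e_def by simp
    show ?thesis
    proof (rule set_eqI, rule iffI)
      fix M assume "M \<in> {M \<in> Omega lab LQ prec D (expansion_item es i). M e = Some \<sigma>}"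
      hence M: "is_tc_match lab LQ prec D (set (take i es)) M" "M e = Some \<sigma>"
        unfolding Omega_def expansion_item_def by auto
      define M1 where "M1 = M |` set (take (i - 1) es)"
      have vals: "\<forall>x\<in>set (take (i - 1) es). the (M x) \<in> D - {\<sigma>}"
      proof
        fix x assume x: "x \<in> set (take (i - 1) es)"
        then obtain k where k: "k < i - 1" "x = es ! k"
          by (auto simp: in_set_conv_nth)
        have pk: "prec x e" unfolding e_def k(2) using chain_prec[OF tr ch k(1) ilt] .
        have xin: "x \<in> set (take i es)" using ti x by simp
        have ein: "e \<in> set (take i es)" using ti by simp
        have "ts (the (M x)) < ts (the (M e))" using M(1) xin ein pk unfolding is_tc_match_def by blast
        hence "the (M x) \<noteq> \<sigma>" using M(2) by auto
        thus "the (M x) \<in> D - {\<sigma>}" using valD[OF M(1) xin] by simp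
      qed
      have M1m: "is_tc_match lab LQ prec (D - {\<sigma>}) (set (take (i - 1) es)) M1"
        unfolding M1_def using restrict_match[OF M(1) _ vals] ti by blast
      have dM: "dom M = set (take i es)" using M(1) unfolding is_tc_match_def by simp
      have eq: "M1 ++ [e \<mapsto> \<sigma>] = M"
      proof
        fix x show "(M1 ++ [e \<mapsto> \<sigma>]) x = M x"
        proof (cases "x = e")
          case True thus ?thesis using M(2) by simp
        next
          case False
          show ?thesis
          proof (cases "x \<in> set (take (i - 1) es)")
            case True thus ?thesis using False unfolding M1_def by simp
          next
            case nin: False
            hence "x \<notin> dom M" using dM ti False by simp
            hence "M x = None" by blast
            thus ?thesis using False nin unfolding M1_def by simp
          qed
        qed
      qed
      have dM1: "dom M1 = set (take (i - 1) es)" using M1m unfolding is_tc_match_def by simp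
      have comp: "compatible lab LQ prec D M1 [e \<mapsto> \<sigma>]"
        unfolding compatible_def using dM1 enot eq M(1) ti by auto
      show "M \<in> join lab LQ prec D (Omega lab LQ prec (D - {\<sigma>}) (expansion_item es (i - 1))) {[e \<mapsto> \<sigma>]}"
        unfolding join_def Omega_def expansion_item_def using M1m comp eq by blast
    next
      fix M assume "M \<in> join lab LQ prec D (Omega lab LQ prec (D - {\<sigma>}) (expansion_item es (i - 1))) {[e \<mapsto> \<sigma>]}"
      then obtain M1 where M1: "is_tc_match lab LQ prec (D - {\<sigma>}) (set (take (i - 1) es)) M1"
        "compatible lab LQ prec D M1 [e \<mapsto> \<sigma>]" "M = M1 ++ [e \<mapsto> \<sigma>]"
        unfolding join_def Omega_def expansion_item_def by auto
      have dM1: "dom M1 = set (take (i - 1) es)" using M1(1) unfolding is_tc_match_def by simp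
      have "is_tc_match lab LQ prec D (set (take i es)) M"
        using M1(2,3) dM1 ti unfolding compatible_def by simp
      thus "M \<in> {M \<in> Omega lab LQ prec D (expansion_item es i). M e = Some \<sigma>}"
        unfolding Omega_def expansion_item_def using M1(3) by simp
    qed
  qed
  have "(\<forall>j\<in>{1..length es}. j \<noteq> i \<longrightarrow>
            {M \<in> Omega lab LQ prec D (expansion_item es j). M e = Some \<sigma>} = {})
       \<and> (i = 1 \<longrightarrow>
            {M \<in> Omega lab LQ prec D (expansion_item es 1). M (es ! 0) = Some \<sigma>} = {[es ! 0 \<mapsto> \<sigma>]})
       \<and> (i \<noteq> 1 \<and> join lab LQ prec D (Omega lab LQ prec (D - {\<sigma>}) (expansion_item es (i - 1))) {[e \<mapsto> \<sigma>]} \<noteq> {}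
          \<longrightarrow> {M \<in> Omega lab LQ prec D (expansion_item es i). M e = Some \<sigma>}
            = join lab LQ prec D (Omega lab LQ prec (D - {\<sigma>}) (expansion_item es (i - 1))) {[e \<mapsto> \<sigma>]})"
    using P1 P2 P3 by blast
  thus ?thesis unfolding D_def e_def \<sigma>_def .
qed

end
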